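(* Let $\mathfrak g$ be a $7$-dimensional real Lie algebra with nontrivial center, and let $\varphi\in\Lambda^3\mathfrak g^*$ define a calibrated $\mathrm{G}_2$-structure on $\mathfrak g$. Let $\pi\colon\mathfrak g\to\mathfrak h$ be a Lie algebra epimorphism onto a $6$-dimensional Lie algebra $\mathfrak h$ whose kernel is contained in the center of $\mathfrak g$; let $\xi$ span $\ker\pi$ and let $\eta=\xi^\flat\in\mathfrak g^*$ be the metric dual of $\xi$ with respect to the inner product determined by $\varphi$. Write $\varphi=\pi^*\omega\wedge\eta+\pi^*\psi^+$ with $\omega\in\Lambda^2\mathfrak h^*$, $\psi^+\in\Lambda^3\mathfrak h^*$, and write $d\eta=\pi^*\gamma$ with $\gamma\in\Lambda^2\mathfrak h^*$ (possible since $\xi$ is central; $\gamma$ is closed and is called the curvature form). Then $\omega$ is a symplectic form on $\mathfrak h$ (closed and nondegenerate), and the class $[\gamma]\in H^2(\mathfrak h^* )$ lies in the kernel of the map $H^2(\mathfrak h^* )\to H^4(\mathfrak h^* )$, $[\beta]\mapsto[\beta\wedge\omega]$. Moreover, if $\gamma$ is exact on $\mathfrak h$, then $\mathfrak g\cong\mathfrak h\oplus\mathbb R$ as Lie algebras.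
   Context: For a real Lie algebra $\mathfrak g$, $d$ denotes the Chevalley–Eilenberg differential on $\Lambda^\bullet\mathfrak g^*$ (on $1$-forms $d\alpha(X,Y)=-\alpha([X,Y])$, extended as a graded derivation), and $H^k(\mathfrak g^* )$ the corresponding cohomology. A $3$-form $\varphi\in\Lambda^3\mathfrak g^*$ on a $7$-dimensional Lie algebra defines a $\mathrm{G}_2$-structure if there is a basis $f^1,\dots,f^7$ of $\mathfrak g^*$ with $\varphi=f^{127}+f^{347}+f^{567}+f^{135}-f^{236}-f^{146}-f^{245}$ (where $f^{ijk}=f^i\wedge f^j\wedge f^k$); $\varphi$ determines the inner product for which such a coframe is orthonormal. The $\mathrm{G}_2$-structure is calibrated if $d\varphi=0$. *)

theory Defs
  imports "HOL-Analysis.Analysis" "HOL-Combinatorics.Permutations"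
begin

definition lie_algebra :: "('v::real_vector \<Rightarrow> 'v \<Rightarrow> 'v) \<Rightarrow> bool" where
  "lie_algebra br \<longleftrightarrow> bilinear br \<and> (\<forall>x. br x x = 0) \<and>
     (\<forall>x y z. br x (br y z) + br y (br z x) + br z (br x y) = 0)"

text \<open>k-forms on V are modelled as functions of a sequence of vectors that only depend on the
first k entries, are linear in each of them and alternating.\<close>
definition alt_form :: "nat \<Rightarrow> ((nat \<Rightarrow> 'v::real_vector) \<Rightarrow> real) \<Rightarrow> bool" where
  "alt_form k \<alpha> \<longleftrightarrow>
     (\<forall>x y. (\<forall>i<k. x i = y i) \<longrightarrow> \<alpha> x = \<alpha> y) \<and>
     (\<forall>i<k. \<forall>x. linear (\<lambda>v. \<alpha> (x(i := v)))) \<and>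
     (\<forall>x i j. i < k \<and> j < k \<and> i \<noteq> j \<and> x i = x j \<longrightarrow> \<alpha> x = 0)"

definition one_form :: "('v \<Rightarrow> real) \<Rightarrow> (nat \<Rightarrow> 'v) \<Rightarrow> real" where
  "one_form f = (\<lambda>x. f (x 0))"

text \<open>Wedge product (determinant convention: f^1 \<and> f^2 (x,y) = f^1(x) f^2(y) - f^1(y) f^2(x)).\<close>
definition wedge :: "nat \<Rightarrow> nat \<Rightarrow> ((nat \<Rightarrow> 'v) \<Rightarrow> real) \<Rightarrow> ((nat \<Rightarrow> 'v) \<Rightarrow> real)
    \<Rightarrow> (nat \<Rightarrow> 'v) \<Rightarrow> real" where
  "wedge k l \<alpha> \<beta> = (\<lambda>x. (\<Sum>\<sigma>\<in>{\<sigma>. \<sigma> permutes {..<k+l}}.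
      of_int (sign \<sigma>) * \<alpha> (x \<circ> \<sigma>) * \<beta> (\<lambda>i. x (\<sigma> (i + k)))) / (fact k * fact l))"

text \<open>Index of the m-th element of {0..} minus {i,j} (for i < j).\<close>
definition skip2 :: "nat \<Rightarrow> nat \<Rightarrow> nat \<Rightarrow> nat" where
  "skip2 i j m = (if m < i then m else if m + 1 < j then m + 1 else m + 2)"

definition ce_d :: "('v \<Rightarrow> 'v \<Rightarrow> 'v) \<Rightarrow> nat \<Rightarrow> ((nat \<Rightarrow> 'v) \<Rightarrow> real) \<Rightarrow> (nat \<Rightarrow> 'v) \<Rightarrow> real" where
  "ce_d br k \<alpha> = (\<lambda>x. \<Sum>i\<in>{..k}. \<Sum>j\<in>{i<..k}.
      (-1) ^ (i + j) * \<alpha> (\<lambda>m. if m = 0 then br (x i) (x j) else x (skip2 i j (m - 1))))"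

definition pullback :: "('v \<Rightarrow> 'w) \<Rightarrow> ((nat \<Rightarrow> 'w) \<Rightarrow> real) \<Rightarrow> (nat \<Rightarrow> 'v) \<Rightarrow> real" where
  "pullback \<pi> \<alpha> = (\<lambda>x. \<alpha> (\<pi> \<circ> x))"

definition f3 :: "(nat \<Rightarrow> 'v \<Rightarrow> real) \<Rightarrow> nat \<Rightarrow> nat \<Rightarrow> nat \<Rightarrow> (nat \<Rightarrow> 'v) \<Rightarrow> real" where
  "f3 f a b c = wedge 2 1 (wedge 1 1 (one_form (f a)) (one_form (f b))) (one_form (f c))"

definition phi_std :: "(nat \<Rightarrow> 'v \<Rightarrow> real) \<Rightarrow> (nat \<Rightarrow> 'v) \<Rightarrow> real" where
  "phi_std f = (\<lambda>x. f3 f 1 2 7 x + f3 f 3 4 7 x + f3 f 5 6 7 x + f3 f 1 3 5 x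
      - f3 f 2 3 6 x - f3 f 1 4 6 x - f3 f 2 4 5 x)"

text \<open>f^1..f^7 is a basis of the dual space (7 linearly independent linear functionals,
the space being 7-dimensional).\<close>
definition coframe7 :: "(nat \<Rightarrow> 'v::real_vector \<Rightarrow> real) \<Rightarrow> bool" where
  "coframe7 f \<longleftrightarrow> (\<forall>i\<in>{1..7}. linear (f i)) \<and>
     (\<forall>c::nat \<Rightarrow> real. (\<forall>v. (\<Sum>i=1..7. c i * f i v) = 0) \<longrightarrow> (\<forall>i\<in>{1..7}. c i = 0))"

definition G2_coframe :: "((nat \<Rightarrow> 'v::real_vector) \<Rightarrow> real) \<Rightarrow> (nat \<Rightarrow> 'v \<Rightarrow> real) \<Rightarrow> bool" where
  "G2_coframe \<phi> f \<longleftrightarrow> coframe7 f \<and> \<phi> = phi_std f"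

definition coframe_inner :: "(nat \<Rightarrow> 'v \<Rightarrow> real) \<Rightarrow> 'v \<Rightarrow> 'v \<Rightarrow> real" where
  "coframe_inner f u v = (\<Sum>i=1..7. f i u * f i v)"

definition sum_R_bracket :: "('h \<Rightarrow> 'h \<Rightarrow> 'h) \<Rightarrow> 'h \<times> real \<Rightarrow> 'h \<times> real \<Rightarrow> 'h \<times> real" where
  "sum_R_bracket br p q = (br (fst p) (fst q), 0)"

end

theory Submission
  imports Defs
begin

definition tup1 :: "'v \<Rightarrow> nat \<Rightarrow> 'v" where "tup1 a = (\<lambda>i. a)"
definition tup2 :: "'v \<Rightarrow> 'v \<Rightarrow> nat \<Rightarrow> 'v" where "tup2 a b = (\<lambda>i. if i = 0 then a else b)"
definition tup3 :: "'v \<Rightarrow> 'v \<Rightarrow> 'v \<Rightarrow> nat \<Rightarrow> 'v" where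
  "tup3 a b c = (\<lambda>i. if i = 0 then a else if i = 1 then b else c)"
definition tup4 :: "'v \<Rightarrow> 'v \<Rightarrow> 'v \<Rightarrow> 'v \<Rightarrow> nat \<Rightarrow> 'v" where
  "tup4 a b c d = (\<lambda>i. if i = 0 then a else if i = 1 then b else if i = 2 then c else d)"

lemma perm_ins: "finite S \<Longrightarrow> a \<notin> S \<Longrightarrow> sum f {p. p permutes (insert a S)} =
    sum (\<lambda>b. sum (\<lambda>q. f (Transposition.transpose a b \<circ> q)) {p. p permutes S}) (insert a S)"
  by (rule sum_over_permutations_insert)

abbreviation "tr \<equiv> Transposition.transpose"
lemma sum_perm3: "sum F {p. p permutes {0,1,2::nat}} = F id + F (tr 1 2) + F (tr 0 1) + F (tr 0 1 \<circ> tr 1 2)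
   + F (tr 0 2) + F (tr 0 2 \<circ> tr 1 2)"
  by (simp add: perm_ins add.assoc)

lemma sign_tr_comp: "permutation p \<Longrightarrow> sign (tr a b \<circ> p) = (if a = b then 1 else -1) * sign p"
  by (simp add: sign_compose permutation_swap_id sign_swap_id)
lemma sign_tr: "sign (tr a b) = (if a = b then 1 else -1)"
  by (simp add: sign_swap_id)
lemma perm_tr_comp: "permutation p \<Longrightarrow> permutation (tr a b \<circ> p)"
  by (simp add: permutation_compose permutation_swap_id)
lemmas signs = sign_tr_comp sign_tr perm_tr_comp permutation_swap_id

lemma sum_perm3_g: "(\<Sum>\<sigma>\<in>{p. p permutes {0,1,2::nat}}. of_int (sign \<sigma>) * (g (\<sigma> 0) (\<sigma> 1) (\<sigma> 2)::real)) =
   g 0 1 2 - g 0 2 1 - g 1 0 2 + g 1 2 0 + g 2 0 1 - g 2 1 0"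
  unfolding sum_perm3 by (simp add: signs del: One_nat_def)


lemma wedge21:
  assumes A: "\<And>x. A x = A (tup2 (x 0) (x 1))" and As: "\<And>a b. A (tup2 b a) = - A (tup2 a b)"
    and B: "\<And>x. B x = B (tup1 (x 0))"
  shows "wedge 2 1 A B x = A (tup2 (x 0) (x 1)) * B (tup1 (x 2)) - A (tup2 (x 0) (x 2)) * B (tup1 (x 1))
     + A (tup2 (x 1) (x 2)) * B (tup1 (x 0))" (is "_ = ?R")
proof -
  have e: "{..<2+1::nat} = {0,1,2}" by auto
  have A': "A (x \<circ> \<sigma>) = A (tup2 (x (\<sigma> 0)) (x (\<sigma> 1)))" for \<sigma> by (subst A) simp
  have B': "B (\<lambda>i. x (\<sigma> (i+2))) = B (tup1 (x (\<sigma> 2)))" for \<sigma>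
  proof -
    have "B (\<lambda>i. x (\<sigma> (i+2))) = B (tup1 ((\<lambda>i. x (\<sigma> (i+2))) 0))" by (rule B)
    then show ?thesis by (simp add: numeral_2_eq_2)
  qed
  define g where "g i j k = A (tup2 (x i) (x j)) * B (tup1 (x k))" for i j k
  have sA: "A (tup2 (x j) (x i)) = - A (tup2 (x i) (x j))" for i j by (rule As)
  have "wedge 2 1 A B x = (\<Sum>\<sigma>\<in>{p. p permutes {0,1,2::nat}}. of_int (sign \<sigma>) * g (\<sigma> 0) (\<sigma> 1) (\<sigma> 2)) / 2"
    unfolding wedge_def e
    apply (rule arg_cong2[where f="(/)"])
     apply (rule sum.cong, rule refl)
     apply (simp only: g_def A' B' mult.assoc)
    by simp
  also have "\<dots> = ?R"
    unfolding sum_perm3_g unfolding g_def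
    apply (simp only: sA[of 1 0] sA[of 2 0] sA[of 2 1] mult_minus_left mult_minus_right)
    by (simp add: field_simps)
  finally show ?thesis .
qed

lemma sum_perm4: "sum F {p. p permutes {0,1,2,3::nat}} =
   (\<Sum>b\<in>{0,1,2,3}. \<Sum>c\<in>{1,2,3}. \<Sum>d\<in>{2,3}. F (tr 0 b \<circ> (tr 1 c \<circ> tr 2 d)))"
  by (simp add: perm_ins)


lemma sum_perm4_g: "(\<Sum>\<sigma>\<in>{p. p permutes {0,1,2,3::nat}}. of_int (sign \<sigma>) * (g (\<sigma> 0) (\<sigma> 1) (\<sigma> 2) (\<sigma> 3)::real)) =
  g 0 1 2 3 - g 0 1 3 2 - g 0 2 1 3 + g 0 2 3 1 + g 0 3 1 2 - g 0 3 2 1 - g 1 0 2 3 + g 1 0 3 2 + g 1 2 0 3 - g 1 2 3 0 - g 1 3 0 2 + g 1 3 2 0 + g 2 0 1 3 - g 2 0 3 1 - g 2 1 0 3 + g 2 1 3 0 + g 2 3 0 1 - g 2 3 1 0 - g 3 0 1 2 + g 3 0 2 1 + g 3 1 0 2 - g 3 1 2 0 - g 3 2 0 1 + g 3 2 1 0"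
  unfolding sum_perm4
  apply (simp only: sum.insert finite.intros insert_iff empty_iff simp_thms zero_neq_one one_neq_zero sum.empty numeral_eq_iff semiring_norm)
  by (simp add: signs del: One_nat_def)

lemma wedge22:
  assumes A: "\<And>x. A x = A (tup2 (x 0) (x 1))" and As: "\<And>a b. A (tup2 b a) = - A (tup2 a b)"
    and B: "\<And>x. B x = B (tup2 (x 0) (x 1))" and Bs: "\<And>a b. B (tup2 b a) = - B (tup2 a b)"
  shows "wedge 2 2 A B x = A (tup2 (x 0) (x 1)) * B (tup2 (x 2) (x 3)) - A (tup2 (x 0) (x 2)) * B (tup2 (x 1) (x 3))
     + A (tup2 (x 0) (x 3)) * B (tup2 (x 1) (x 2)) + A (tup2 (x 1) (x 2)) * B (tup2 (x 0) (x 3))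
     - A (tup2 (x 1) (x 3)) * B (tup2 (x 0) (x 2)) + A (tup2 (x 2) (x 3)) * B (tup2 (x 0) (x 1))" (is "_ = ?R")
proof -
  have e: "{..<2+2::nat} = {0,1,2,3}" by auto
  have A': "A (x \<circ> \<sigma>) = A (tup2 (x (\<sigma> 0)) (x (\<sigma> 1)))" for \<sigma> by (subst A) simp
  have B': "B (\<lambda>i. x (\<sigma> (i+2))) = B (tup2 (x (\<sigma> 2)) (x (\<sigma> 3)))" for \<sigma>
  proof -
    have "B (\<lambda>i. x (\<sigma> (i+2))) = B (tup2 ((\<lambda>i. x (\<sigma> (i+2))) 0) ((\<lambda>i. x (\<sigma> (i+2))) 1))" by (rule B)
    then show ?thesis by (simp add: numeral_2_eq_2 numeral_3_eq_3)
  qed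
  define g where "g i j k l = A (tup2 (x i) (x j)) * B (tup2 (x k) (x l))" for i j k l
  have sA: "A (tup2 (x j) (x i)) = - A (tup2 (x i) (x j))" for i j by (rule As)
  have sB: "B (tup2 (x j) (x i)) = - B (tup2 (x i) (x j))" for i j by (rule Bs)
  have "wedge 2 2 A B x = (\<Sum>\<sigma>\<in>{p. p permutes {0,1,2,3::nat}}. of_int (sign \<sigma>) * g (\<sigma> 0) (\<sigma> 1) (\<sigma> 2) (\<sigma> 3)) / 4"
    unfolding wedge_def e
    apply (rule arg_cong2[where f="(/)"])
     apply (rule sum.cong, rule refl)
     apply (simp only: g_def A' B' mult.assoc)
    by simp
  also have "\<dots> = ?R"
    unfolding sum_perm4_g unfolding g_def
    apply (simp only: sA[of 1 0] sA[of 2 0] sA[of 3 0] sA[of 2 1] sA[of 3 1] sA[of 3 2] sB[of 1 0] sB[of 2 0] sB[of 3 0] sB[of 2 1] sB[of 3 1] sB[of 3 2] mult_minus_left mult_minus_right)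
    by (simp add: field_simps)
  finally show ?thesis .
qed

lemma alt_dep: "alt_form k \<alpha> \<Longrightarrow> (\<And>i. i < k \<Longrightarrow> x i = y i) \<Longrightarrow> \<alpha> x = \<alpha> y"
  unfolding alt_form_def by blast

lemma alt_zero: assumes "alt_form k \<alpha>" "i < k" "x i = 0" shows "\<alpha> x = 0"
proof -
  have "linear (\<lambda>v. \<alpha> (x(i := v)))" using assms unfolding alt_form_def by blast
  then have "\<alpha> (x(i := 0)) = 0" using linear_0 by fastforce
  moreover have "x(i := 0) = x" using assms(3) by auto
  ultimately show ?thesis by simp
qed

lemma alt1_lam: "alt_form 1 \<alpha> \<Longrightarrow> \<alpha> (\<lambda>m. if m = 0 then a else F m) = \<alpha> (tup1 a)"
  by (erule alt_dep) (simp add: tup1_def)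
lemma alt2_lam: "alt_form 2 \<alpha> \<Longrightarrow> \<alpha> (\<lambda>m. if m = 0 then a else F m) = \<alpha> (tup2 a (F 1))"
  by (erule alt_dep) (auto simp add: tup2_def less_2_cases_iff)
lemma alt3_lam: "alt_form 3 \<alpha> \<Longrightarrow> \<alpha> (\<lambda>m. if m = 0 then a else F m) = \<alpha> (tup3 a (F 1) (F 2))"
  by (erule alt_dep) (auto simp add: tup3_def numeral_3_eq_3 numeral_2_eq_2 less_Suc_eq)

lemma alt2_norm: "alt_form 2 \<alpha> \<Longrightarrow> \<alpha> y = \<alpha> (tup2 (y 0) (y 1))"
  by (erule alt_dep) (auto simp add: tup2_def less_2_cases_iff)
lemma alt3_norm: "alt_form 3 \<alpha> \<Longrightarrow> \<alpha> y = \<alpha> (tup3 (y 0) (y 1) (y 2))"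
  by (erule alt_dep) (auto simp add: tup3_def numeral_3_eq_3 numeral_2_eq_2 less_Suc_eq)
lemma alt1_norm: "alt_form 1 \<alpha> \<Longrightarrow> \<alpha> y = \<alpha> (tup1 (y 0))"
  by (erule alt_dep) (auto simp add: tup1_def)

lemma alt2_swap: assumes a: "alt_form 2 \<alpha>" shows "\<alpha> (tup2 b c) = - \<alpha> (tup2 c b)"
proof -
  define L where "L u v = \<alpha> (tup2 u v)" for u v
  have l1: "L (u + u') w = L u w + L u' w" for u u' w
  proof -
    have "linear (\<lambda>v. \<alpha> ((tup2 0 w)(0 := v)))" using a unfolding alt_form_def by auto
    moreover have "(tup2 0 w)(0 := v) = tup2 v w" for v by (auto simp: tup2_def)
    ultimately have "linear (\<lambda>v. L v w)" unfolding L_def by simp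
    then show ?thesis unfolding linear_iff by blast
  qed
  have l2: "L u (w + w') = L u w + L u w'" for u w w'
  proof -
    have "linear (\<lambda>v. \<alpha> ((tup2 u 0)(1 := v)))" using a unfolding alt_form_def by auto
    moreover have "\<alpha> ((tup2 u 0)(1 := v)) = \<alpha> (tup2 u v)" for v
      by (rule alt_dep[OF a]) (auto simp: tup2_def less_2_cases_iff)
    ultimately have "linear (\<lambda>v. L u v)" unfolding L_def by simp
    then show ?thesis unfolding linear_iff by blast
  qed
  have z: "L u u = 0" for u
  proof -
    have "\<forall>x i j. i < 2 \<and> j < 2 \<and> i \<noteq> j \<and> x i = x j \<longrightarrow> \<alpha> x = 0" using a unfolding alt_form_def by blast
    from this[rule_format, of 0 1 "tup2 u u"] show ?thesis unfolding L_def tup2_def by simp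
  qed
  have "L (b + c) (b + c) = L b b + L b c + (L c b + L c c)" by (simp only: l1 l2)
  then have "L b c + L c b = 0" using z[of b] z[of c] z[of "b+c"] by simp
  then show ?thesis unfolding L_def by linarith
qed

lemma atMost3: "{..3::nat} = {0,1,2,3}" by auto
lemma atMost2: "{..2::nat} = {0,1,2}" by auto
lemma atMost1: "{..1::nat} = {0,1}" by auto
lemma gAM: "{0<..3::nat} = {1,2,3}" "{1<..3::nat} = {2,3}" "{2<..3::nat} = {3}" "{3<..3::nat} = {}"
  "{0<..2::nat} = {1,2}" "{1<..2::nat} = {2}" "{2<..2::nat} = {}" "{0<..1::nat} = {1}" "{1<..1::nat} = {}"
  "{0<..Suc 0} = {Suc 0}" "{Suc 0<..Suc 0} = {}" "{Suc 0<..2::nat} = {2}" "{Suc 0<..3::nat} = {2,3}"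
  by auto

lemma sumexp:
  "sum h {..3::nat} = h 0 + h 1 + h 2 + h 3" "sum h {..2::nat} = h 0 + h 1 + h 2" "sum h {..1::nat} = h 0 + h 1"
  "sum h {0<..3::nat} = h 1 + h 2 + h 3" "sum h {1<..3::nat} = h 2 + h 3" "sum h {2<..3::nat} = h 3"
  "sum h {3<..3::nat} = 0"
  "sum h {0<..2::nat} = h 1 + h 2" "sum h {1<..2::nat} = h 2" "sum h {2<..2::nat} = 0"
  "sum h {0<..1::nat} = h 1" "sum h {1<..1::nat} = 0"
  by (simp_all add: atMost3 atMost2 atMost1 gAM add.assoc)

lemma ce_d1: assumes a: "alt_form 1 \<alpha>" shows "ce_d br 1 \<alpha> x = - \<alpha> (tup1 (br (x 0) (x 1)))"
  unfolding ce_d_def sumexp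
  by (simp add: alt1_lam[OF a])

lemma ce_d2: assumes a: "alt_form 2 \<alpha>" shows "ce_d br 2 \<alpha> x = - \<alpha> (tup2 (br (x 0) (x 1)) (x 2))
   + \<alpha> (tup2 (br (x 0) (x 2)) (x 1)) - \<alpha> (tup2 (br (x 1) (x 2)) (x 0))"
  unfolding ce_d_def sumexp
  by (simp add: alt2_lam[OF a] skip2_def numeral_2_eq_2)

lemma ce_d3: assumes a: "alt_form 3 \<alpha>" shows "ce_d br 3 \<alpha> x = - \<alpha> (tup3 (br (x 0) (x 1)) (x 2) (x 3))
   + \<alpha> (tup3 (br (x 0) (x 2)) (x 1) (x 3)) - \<alpha> (tup3 (br (x 0) (x 3)) (x 1) (x 2))
   - \<alpha> (tup3 (br (x 1) (x 2)) (x 0) (x 3)) + \<alpha> (tup3 (br (x 1) (x 3)) (x 0) (x 2))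
   - \<alpha> (tup3 (br (x 2) (x 3)) (x 0) (x 1))"
  unfolding ce_d_def sumexp
  by (simp add: alt3_lam[OF a] skip2_def numeral_2_eq_2 numeral_3_eq_3)

definition g2c :: "(nat \<Rightarrow> real) \<Rightarrow> (nat \<Rightarrow> real) \<Rightarrow> nat \<Rightarrow> real" where
  "g2c X Z j = (if j = 1 then (- X 2 * Z 7 - X 3 * Z 5 + X 4 * Z 6 + X 5 * Z 3 - X 6 * Z 4 + X 7 * Z 2) else if j = 2 then (X 1 * Z 7 + X 3 * Z 6 + X 4 * Z 5 - X 5 * Z 4 - X 6 * Z 3 - X 7 * Z 1) else if j = 3 then (X 1 * Z 5 - X 2 * Z 6 - X 4 * Z 7 - X 5 * Z 1 + X 6 * Z 2 + X 7 * Z 4) else if j = 4 then (- X 1 * Z 6 - X 2 * Z 5 + X 3 * Z 7 + X 5 * Z 2 + X 6 * Z 1 - X 7 * Z 3) else if j = 5 then (- X 1 * Z 3 + X 2 * Z 4 + X 3 * Z 1 - X 4 * Z 2 - X 6 * Z 7 + X 7 * Z 6) else if j = 6 then (X 1 * Z 4 + X 2 * Z 3 - X 3 * Z 2 - X 4 * Z 1 + X 5 * Z 7 - X 7 * Z 5) else if j = 7 then (- X 1 * Z 2 + X 2 * Z 1 - X 3 * Z 4 + X 4 * Z 3 - X 5 * Z 6 + X 6 * Z 5) else 0)"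

lemma set17: "{1..7::nat} = {1,2,3,4,5,6,7}" by auto

lemma sum17: "sum h {1..7::nat} = h 1 + h 2 + h 3 + h 4 + h 5 + h 6 + h 7"
  unfolding set17 by (simp add: add.assoc)

lemma lagrange7: "(\<Sum>i\<in>{1..7}. \<Sum>j\<in>{1..7}. (X i * Z j - X j * Z i)^2) = 2 * (\<Sum>j\<in>{1..7}. (g2c X Z j)^2)"
  unfolding sum17 g2c_def by (simp add: power2_eq_square algebra_simps)

lemma sum_perm2: "sum F {p. p permutes {0,1::nat}} = F id + F (tr 0 1)"
  by (simp add: perm_ins)

lemma sum_perm2_g: "(\<Sum>\<sigma>\<in>{p. p permutes {0,1::nat}}. of_int (sign \<sigma>) * (g (\<sigma> 0) (\<sigma> 1)::real)) = g 0 1 - g 1 0"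
  unfolding sum_perm2 by (simp add: signs)

lemma wedge11: "wedge 1 1 (one_form a) (one_form b) x = a (x 0) * b (x 1) - a (x 1) * b (x 0)"
proof -
  have e: "{..<1+1::nat} = {0,1}" by auto
  define g where "g i j = a (x i) * b (x j)" for i j
  have "wedge 1 1 (one_form a) (one_form b) x = (\<Sum>\<sigma>\<in>{p. p permutes {0,1::nat}}. of_int (sign \<sigma>) * g (\<sigma> 0) (\<sigma> 1))"
    unfolding wedge_def e
    by (simp add: g_def one_form_def mult.assoc)
  also have "\<dots> = a (x 0) * b (x 1) - a (x 1) * b (x 0)"
    unfolding sum_perm2_g unfolding g_def by simp
  finally show ?thesis .
qed

lemma f3_eval: "f3 f a b c x = (f a (x 0) * f b (x 1) - f a (x 1) * f b (x 0)) * f c (x 2)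
   - (f a (x 0) * f b (x 2) - f a (x 2) * f b (x 0)) * f c (x 1)
   + (f a (x 1) * f b (x 2) - f a (x 2) * f b (x 1)) * f c (x 0)"
  unfolding f3_def
  apply (subst wedge21)
  apply (unfold wedge11)
  apply (unfold one_form_def tup2_def tup1_def)
  apply simp_all
  done

lemma phi_eval: "phi_std f (tup3 u v w) = (\<Sum>j\<in>{1..7}. g2c (\<lambda>i. f i u) (\<lambda>i. f i w) j * f j v)"
  unfolding phi_std_def f3_eval sum17 g2c_def tup3_def by (simp add: algebra_simps)

lemma coframe_inj:
  fixes f :: "nat \<Rightarrow> 'g::euclidean_space \<Rightarrow> real"
  assumes dim: "DIM('g) = 7" and cf: "coframe7 f" and z: "\<forall>i\<in>{1..7}. f i v = 0"
  shows "v = 0"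
proof -
  have lin: "linear (f i)" if "i \<in> {1..7}" for i using cf that unfolding coframe7_def by blast
  have indep: "\<forall>i\<in>{1..7}. c i = 0" if "\<forall>v. (\<Sum>i=1..7. c i * f i v) = 0" for c
    using cf that unfolding coframe7_def by blast
  define a where "a i = (\<Sum>b\<in>Basis. f i b *\<^sub>R b)" for i
  have fa: "f i w = a i \<bullet> w" if "i \<in> {1..7}" for i w
  proof -
    have "f i w = f i (\<Sum>b\<in>Basis. (w \<bullet> b) *\<^sub>R b)" by (simp add: euclidean_representation)
    also have "\<dots> = (\<Sum>b\<in>Basis. (w \<bullet> b) * f i b)" using lin[OF that] by (simp add: linear_sum linear_scale)
    also have "\<dots> = a i \<bullet> w" unfolding a_def inner_sum_left by (simp add: inner_commute mult.commute)
    finally show ?thesis .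
  qed
  have inj: "inj_on a {1..7}"
  proof (rule inj_onI)
    fix i j assume i: "i \<in> {1..7}" and j: "j \<in> {1..7}" and e: "a i = a j"
    show "i = j"
    proof (rule ccontr)
      assume ne: "i \<noteq> j"
      define c where "c k = (if k = i then 1 else if k = j then -1 else (0::real))" for k
      have "\<forall>v. (\<Sum>k=1..7. c k * f k v) = 0"
      proof
        fix v
        have "(\<Sum>k=1..7. c k * f k v) = (\<Sum>k\<in>{1..7}. (if k = i then f k v else 0) - (if k = j then f k v else 0))"
          by (rule sum.cong) (auto simp: c_def ne)
        also have "\<dots> = f i v - f j v" using i j by (simp add: sum_subtractf)
        also have "\<dots> = 0" using fa i j e by simp
        finally show "(\<Sum>k=1..7. c k * f k v) = 0" .
      qed
      then have "c i = 0" using indep i by blast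
      then show False by (simp add: c_def)
    qed
  qed
  let ?A = "a ` {1..7}"
  have indA: "independent ?A"
  proof (rule independent_if_scalars_zero)
    show "finite ?A" by simp
    fix u x assume s: "(\<Sum>x\<in>?A. u x *\<^sub>R x) = 0" and x: "x \<in> ?A"
    have s2: "(\<Sum>k\<in>{1..7}. u (a k) *\<^sub>R a k) = 0" using s[unfolded sum.reindex[OF inj]] by (simp add: comp_def)
    have "\<forall>w. (\<Sum>k=1..7. u (a k) * f k w) = 0"
    proof
      fix w
      have "(\<Sum>k=1..7. u (a k) * f k w) = (\<Sum>k=1..7. u (a k) * (a k \<bullet> w))"
        by (rule sum.cong) (simp_all add: fa)
      also have "\<dots> = (\<Sum>k=1..7. u (a k) *\<^sub>R a k) \<bullet> w" by (simp add: inner_sum_left)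
      also have "\<dots> = 0" using s2 by simp
      finally show "(\<Sum>k=1..7. u (a k) * f k w) = 0" .
    qed
    then have "\<forall>k\<in>{1..7}. u (a k) = 0" using indep[of "\<lambda>k. u (a k)"] by blast
    then show "u x = 0" using x by auto
  qed
  have cardA: "card ?A = 7" using card_image[OF inj] by simp
  have "UNIV \<subseteq> span ?A"
    by (rule card_ge_dim_independent) (use indA cardA dim in auto)
  then have vs: "v \<in> span ?A" by auto
  have "orthogonal v v"
    by (rule orthogonal_to_span[OF vs]) (use fa z in \<open>auto simp: orthogonal_def inner_commute\<close>)
  then show "v = 0" by (simp add: orthogonal_def)
qed

lemma lie_antisym: assumes "lie_algebra br" shows "br a b = - br b a"
proof -
  have bl: "bilinear br" and z: "\<And>x. br x x = 0" using assms unfolding lie_algebra_def by auto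
  have "br (a + b) (a + b) = br a a + br a b + (br b a + br b b)"
    by (simp add: bilinear_ladd[OF bl] bilinear_radd[OF bl])
  then have "br a b + br b a = 0" using z[of a] z[of b] z[of "a+b"] by simp
  then show ?thesis by (simp add: eq_neg_iff_add_eq_0)
qed

lemma tup_simps:
  "tup1 a i = a"
  "tup2 a b 0 = a" "tup2 a b (Suc 0) = b" "tup2 a b 1 = b"
  "tup3 a b c 0 = a" "tup3 a b c (Suc 0) = b" "tup3 a b c 1 = b" "tup3 a b c 2 = c"
  "tup4 a b c d 0 = a" "tup4 a b c d (Suc 0) = b" "tup4 a b c d 1 = b" "tup4 a b c d 2 = c" "tup4 a b c d 3 = d"
  by (simp_all add: tup1_def tup2_def tup3_def tup4_def)

lemma alt2_zero: assumes "alt_form 2 \<alpha>" shows "\<alpha> (tup2 0 b) = 0" "\<alpha> (tup2 a 0) = 0"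
  by (rule alt_zero[OF assms, of 0], simp_all add: tup_simps)
     (rule alt_zero[OF assms, of 1], simp_all add: tup_simps)

lemma alt3_zero: assumes "alt_form 3 \<alpha>" shows "\<alpha> (tup3 0 b c) = 0" "\<alpha> (tup3 a 0 c) = 0" "\<alpha> (tup3 a b 0) = 0"
  by (rule alt_zero[OF assms, of 0], simp_all add: tup_simps)
     (rule alt_zero[OF assms, of 1], simp_all add: tup_simps, rule alt_zero[OF assms, of 2], simp_all add: tup_simps)

lemma pb2: assumes "alt_form 2 \<alpha>" shows "pullback \<pi> \<alpha> y = \<alpha> (tup2 (\<pi> (y 0)) (\<pi> (y 1)))"
  unfolding pullback_def by (rule alt_dep[OF assms]) (auto simp: tup2_def less_2_cases_iff)

lemma pb3: assumes "alt_form 3 \<alpha>" shows "pullback \<pi> \<alpha> y = \<alpha> (tup3 (\<pi> (y 0)) (\<pi> (y 1)) (\<pi> (y 2)))"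
  unfolding pullback_def by (rule alt_dep[OF assms]) (auto simp: tup3_def numeral_3_eq_3 numeral_2_eq_2 less_Suc_eq)
theorem proposition2p1:
  fixes brg :: "'g::euclidean_space \<Rightarrow> 'g \<Rightarrow> 'g"
    and brh :: "'h::euclidean_space \<Rightarrow> 'h \<Rightarrow> 'h"
    and \<phi> :: "(nat \<Rightarrow> 'g) \<Rightarrow> real"
    and f :: "nat \<Rightarrow> 'g \<Rightarrow> real"
    and \<pi> :: "'g \<Rightarrow> 'h"
    and \<xi> :: 'g
    and \<eta> :: "(nat \<Rightarrow> 'g) \<Rightarrow> real"
    and \<omega> \<gamma> :: "(nat \<Rightarrow> 'h) \<Rightarrow> real"
    and \<psi> :: "(nat \<Rightarrow> 'h) \<Rightarrow> real"
  assumes g_lie: "lie_algebra brg" and g_dim: "DIM('g) = 7"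
    and h_lie: "lie_algebra brh" and h_dim: "DIM('h) = 6"
    and center: "\<exists>z. z \<noteq> 0 \<and> (\<forall>y. brg z y = 0)"
    and phi_form: "alt_form 3 \<phi>"
    and G2: "G2_coframe \<phi> f"
    and calibrated: "ce_d brg 3 \<phi> = (\<lambda>x. 0)"
    and pi_lin: "linear \<pi>" and pi_surj: "surj \<pi>"
    and pi_hom: "\<forall>x y. \<pi> (brg x y) = brh (\<pi> x) (\<pi> y)"
    and ker_central: "\<forall>x. \<pi> x = 0 \<longrightarrow> (\<forall>y. brg x y = 0)"
    and xi_span: "\<xi> \<noteq> 0" "{x. \<pi> x = 0} = range (\<lambda>t::real. t *\<^sub>R \<xi>)"
    and eta_def: "\<eta> = one_form (coframe_inner f \<xi>)"
    and omega_form: "alt_form 2 \<omega>" and psi_form: "alt_form 3 \<psi>"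
    and decomp: "\<phi> = (\<lambda>x. wedge 2 1 (pullback \<pi> \<omega>) \<eta> x + pullback \<pi> \<psi> x)"
    and gamma_form: "alt_form 2 \<gamma>"
    and curvature: "ce_d brg 1 \<eta> = pullback \<pi> \<gamma>"
  shows "ce_d brh 2 \<omega> = (\<lambda>x. 0)
    \<and> (\<forall>u. (\<forall>v. \<omega> (\<lambda>i. if i = 0 then u else v) = 0) \<longrightarrow> u = 0)
    \<and> (\<exists>\<rho>. alt_form 3 \<rho> \<and> wedge 2 2 \<gamma> \<omega> = ce_d brh 3 \<rho>)
    \<and> ((\<exists>\<beta>. alt_form 1 \<beta> \<and> \<gamma> = ce_d brh 1 \<beta>) \<longrightarrow>
        (\<exists>\<Phi> :: 'g \<Rightarrow> 'h \<times> real. linear \<Phi> \<and> bij \<Phi> \<and>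
           (\<forall>x y. \<Phi> (brg x y) = sum_R_bracket brh (\<Phi> x) (\<Phi> y))))"
proof -
  have cf: "coframe7 f" and phi_eq: "\<phi> = phi_std f" using G2 unfolding G2_coframe_def by auto
  have flin: "linear (f i)" if "i \<in> {1..7}" for i using cf that unfolding coframe7_def by blast
  define e where "e = coframe_inner f \<xi>"
  have e_def': "e v = (\<Sum>i=1..7. f i \<xi> * f i v)" for v unfolding e_def coframe_inner_def by simp
  have e_add: "e (a + b) = e a + e b" for a b
  proof -
    have "e (a + b) = (\<Sum>i=1..7. f i \<xi> * f i a + f i \<xi> * f i b)"
      unfolding e_def' by (rule sum.cong) (simp_all add: linear_add[OF flin] distrib_left)
    then show ?thesis unfolding e_def' by (simp add: sum.distrib)
  qed
  have e_scale: "e (r *\<^sub>R a) = r * e a" for r a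
  proof -
    have "e (r *\<^sub>R a) = (\<Sum>i=1..7. r * (f i \<xi> * f i a))"
      unfolding e_def' by (rule sum.cong) (simp_all add: linear_scale[OF flin])
    then show ?thesis unfolding e_def' by (simp add: sum_distrib_left)
  qed
  have e_lin: "linear e" by (rule linearI) (simp_all add: e_add e_scale)
  have e0: "e 0 = 0" using e_scale[of 0 0] by simp
  define c where "c = e \<xi>"
  have c_pos: "c > 0"
  proof -
    have c_eq: "c = (\<Sum>i=1..7. (f i \<xi>)^2)" unfolding c_def e_def' by (simp add: power2_eq_square)
    have "c \<noteq> 0"
    proof
      assume "c = 0"
      then have "\<forall>i\<in>{1..7}. (f i \<xi>)^2 = 0" unfolding c_eq by (subst (asm) sum_nonneg_eq_0_iff) auto
      then have "\<xi> = 0" using coframe_inj[OF g_dim cf] by simp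
      then show False using xi_span(1) by simp
    qed
    moreover have "c \<ge> 0" unfolding c_eq by (simp add: sum_nonneg)
    ultimately show ?thesis by simp
  qed
  have eta_ev: "\<eta> x = e (x 0)" for x unfolding eta_def one_form_def e_def by simp
  have pxi: "\<pi> \<xi> = 0"
  proof -
    have "\<xi> \<in> {x. \<pi> x = 0}" unfolding xi_span(2) by (rule range_eqI[of _ _ 1]) simp
    then show ?thesis by simp
  qed
  have pi0: "\<pi> 0 = 0" using linear_0[OF pi_lin] .
  have pi_add: "\<pi> (a + b) = \<pi> a + \<pi> b" for a b using linear_add[OF pi_lin] .
  have pi_scale: "\<pi> (r *\<^sub>R a) = r *\<^sub>R \<pi> a" for r a using linear_scale[OF pi_lin] .
  have cen1: "brg \<xi> y = 0" for y using ker_central pxi by blast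
  have cen2: "brg y \<xi> = 0" for y using lie_antisym[OF g_lie, of y \<xi>] cen1 by simp
  have eta_form: "alt_form 1 \<eta>"
    unfolding alt_form_def eta_ev using e_lin by auto
  have PHI: "\<phi> x = \<omega> (tup2 (\<pi> (x 0)) (\<pi> (x 1))) * e (x 2) - \<omega> (tup2 (\<pi> (x 0)) (\<pi> (x 2))) * e (x 1)
      + \<omega> (tup2 (\<pi> (x 1)) (\<pi> (x 2))) * e (x 0) + \<psi> (tup3 (\<pi> (x 0)) (\<pi> (x 1)) (\<pi> (x 2)))" for x
  proof -
    have "wedge 2 1 (pullback \<pi> \<omega>) \<eta> x = pullback \<pi> \<omega> (tup2 (x 0) (x 1)) * \<eta> (tup1 (x 2))
      - pullback \<pi> \<omega> (tup2 (x 0) (x 2)) * \<eta> (tup1 (x 1)) + pullback \<pi> \<omega> (tup2 (x 1) (x 2)) * \<eta> (tup1 (x 0))"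
    proof (rule wedge21)
      show "pullback \<pi> \<omega> y = pullback \<pi> \<omega> (tup2 (y 0) (y 1))" for y
        unfolding pb2[OF omega_form] by (simp add: tup_simps)
      show "pullback \<pi> \<omega> (tup2 b a) = - pullback \<pi> \<omega> (tup2 a b)" for a b
        unfolding pb2[OF omega_form] tup_simps by (rule alt2_swap[OF omega_form])
      show "\<eta> y = \<eta> (tup1 (y 0))" for y unfolding eta_ev by (simp add: tup_simps)
    qed
    then show ?thesis
      unfolding decomp pb2[OF omega_form] pb3[OF psi_form] eta_ev by (simp add: tup_simps)
  qed
  have curv: "e (brg a b) = - \<gamma> (tup2 (\<pi> a) (\<pi> b))" for a b
  proof -
    have "ce_d brg 1 \<eta> (tup2 a b) = pullback \<pi> \<gamma> (tup2 a b)" using curvature by simp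
    then show ?thesis unfolding ce_d1[OF eta_form] pb2[OF gamma_form] eta_ev by (simp add: tup_simps)
  qed
  note wz = alt2_zero[OF omega_form] alt3_zero[OF psi_form]
  have P1: "ce_d brh 2 \<omega> = (\<lambda>x. 0)"
  proof
    fix y :: "nat \<Rightarrow> 'h"
    obtain x0 where x0: "\<pi> x0 = y 0" using pi_surj by (metis surjD)
    obtain x1 where x1: "\<pi> x1 = y 1" using pi_surj by (metis surjD)
    obtain x2 where x2: "\<pi> x2 = y 2" using pi_surj by (metis surjD)
    have "ce_d brg 3 \<phi> (tup4 x0 x1 x2 \<xi>) = 0" using calibrated by simp
    then have "c * ce_d brh 2 \<omega> y = 0"
      unfolding ce_d3[OF phi_form] ce_d2[OF omega_form] PHI
      by (simp add: tup_simps pi_hom pxi cen1 cen2 wz e0 pi0 x0 x1 x2 c_def algebra_simps)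
    then show "ce_d brh 2 \<omega> y = 0" using c_pos by simp
  qed
  have P2: "\<forall>u. (\<forall>v. \<omega> (\<lambda>i. if i = 0 then u else v) = 0) \<longrightarrow> u = 0"
  proof (intro allI impI)
    fix u :: 'h
    assume h: "\<forall>v. \<omega> (\<lambda>i. if i = 0 then u else v) = 0"
    then have h': "\<omega> (tup2 u v) = 0" for v unfolding tup2_def by simp
    obtain x where x: "\<pi> x = u" using pi_surj by (metis surjD)
    define X where "X = (\<lambda>i. f i x)"
    define Z where "Z = (\<lambda>i. f i \<xi>)"
    have phi0: "phi_std f (tup3 x v \<xi>) = 0" for v
    proof -
      have "\<phi> (tup3 x v \<xi>) = c * \<omega> (tup2 u (\<pi> v))"
        unfolding PHI by (simp add: tup_simps x pxi wz c_def)
      then show ?thesis using h' phi_eq by simp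
    qed
    have gz: "\<forall>j\<in>{1..7}. g2c X Z j = 0"
    proof -
      have "\<forall>v. (\<Sum>j=1..7. g2c X Z j * f j v) = 0" using phi0 unfolding phi_eval X_def Z_def by simp
      then show ?thesis using cf unfolding coframe7_def by blast
    qed
    then have "(\<Sum>i\<in>{1..7}. \<Sum>j\<in>{1..7}. (X i * Z j - X j * Z i)^2) = 0" unfolding lagrange7 by simp
    then have pair: "X i * Z j = X j * Z i" if "i \<in> {1..7}" "j \<in> {1..7}" for i j
      using that by (simp add: sum_nonneg_eq_0_iff sum_nonneg)
    obtain k where k: "k \<in> {1..7}" "Z k \<noteq> 0"
    proof (rule ccontr)
      assume "\<not> thesis"
      then have "\<forall>k\<in>{1..7}. f k \<xi> = 0" using that unfolding Z_def by blast
      then have "\<xi> = 0" by (rule coframe_inj[OF g_dim cf])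
      then show False using xi_span(1) by simp
    qed
    define t where "t = X k / Z k"
    have "\<forall>i\<in>{1..7}. f i (x - t *\<^sub>R \<xi>) = 0"
    proof
      fix i :: nat assume i: "i \<in> {1..7}"
      have "f i (x - t *\<^sub>R \<xi>) = X i - t * Z i"
        unfolding X_def Z_def by (simp add: linear_diff[OF flin[OF i]] linear_scale[OF flin[OF i]])
      also have "\<dots> = (X i * Z k - X k * Z i) / Z k" unfolding t_def using k(2) by (simp add: field_simps)
      also have "\<dots> = 0" using pair[OF i k(1)] by simp
      finally show "f i (x - t *\<^sub>R \<xi>) = 0" .
    qed
    then have "x - t *\<^sub>R \<xi> = 0" by (rule coframe_inj[OF g_dim cf])
    then have "x = t *\<^sub>R \<xi>" by simp
    then show "u = 0" using x pxi pi_scale by simp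
  qed
  have e_diff: "e (a - b) = e a - e b" for a b using linear_diff[OF e_lin] .
  have pi_diff: "\<pi> (a - b) = \<pi> a - \<pi> b" for a b using linear_diff[OF pi_lin] .
  have lift: "\<exists>x. \<pi> x = w \<and> e x = 0" for w
  proof -
    obtain x' where x': "\<pi> x' = w" using pi_surj by (metis surjD)
    define x where "x = x' - (e x' / c) *\<^sub>R \<xi>"
    have "\<pi> x = w" unfolding x_def by (simp add: pi_diff pi_scale pxi x')
    moreover have "e x = 0" unfolding x_def using c_pos by (simp add: e_diff e_scale c_def)
    ultimately show ?thesis by blast
  qed
  have rho_form: "alt_form 3 (\<lambda>x. - \<psi> x)"
    using psi_form unfolding alt_form_def by (auto intro: linear_compose_neg)
  have P3: "\<exists>\<rho>. alt_form 3 \<rho> \<and> wedge 2 2 \<gamma> \<omega> = ce_d brh 3 \<rho>"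
  proof (intro exI conjI)
    show "alt_form 3 (\<lambda>x. - \<psi> x)" by (rule rho_form)
    show "wedge 2 2 \<gamma> \<omega> = ce_d brh 3 (\<lambda>x. - \<psi> x)"
    proof
      fix y :: "nat \<Rightarrow> 'h"
      have mc: "\<omega> a * \<gamma> b = \<gamma> b * \<omega> a" for a b by (rule mult.commute)
      obtain x0 where x0: "\<pi> x0 = y 0" "e x0 = 0" using lift by blast
      obtain x1 where x1: "\<pi> x1 = y 1" "e x1 = 0" using lift by blast
      obtain x2 where x2: "\<pi> x2 = y 2" "e x2 = 0" using lift by blast
      obtain x3 where x3: "\<pi> x3 = y 3" "e x3 = 0" using lift by blast
      have "ce_d brg 3 \<phi> (tup4 x0 x1 x2 x3) = 0" using calibrated by simp
      moreover have "wedge 2 2 \<gamma> \<omega> y - ce_d brh 3 (\<lambda>x. - \<psi> x) y = ce_d brg 3 \<phi> (tup4 x0 x1 x2 x3)"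
        apply (unfold ce_d3[OF phi_form])
        apply (unfold PHI)
        apply (unfold ce_d3[OF rho_form])
        apply (unfold wedge22[where A=\<gamma> and B=\<omega>, OF alt2_norm[OF gamma_form] alt2_swap[OF gamma_form] alt2_norm[OF omega_form] alt2_swap[OF omega_form]])
        apply (simp only: tup_simps pi_hom curv x0 x1 x2 x3 mult_zero_left mult_zero_right mult_minus_left mult_minus_right add_0_left add_0_right diff_0 diff_0_right mc)
        done
      ultimately show "wedge 2 2 \<gamma> \<omega> y = ce_d brh 3 (\<lambda>x. - \<psi> x) y" by simp
    qed
  qed
  have P4: "(\<exists>\<beta>. alt_form 1 \<beta> \<and> \<gamma> = ce_d brh 1 \<beta>) \<longrightarrow>
        (\<exists>\<Phi> :: 'g \<Rightarrow> 'h \<times> real. linear \<Phi> \<and> bij \<Phi> \<and>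
           (\<forall>x y. \<Phi> (brg x y) = sum_R_bracket brh (\<Phi> x) (\<Phi> y)))"
  proof (rule impI, elim exE conjE)
    fix \<beta> assume bf: "alt_form 1 \<beta>" and gb: "\<gamma> = ce_d brh 1 \<beta>"
    define b where "b w = \<beta> (tup1 w)" for w
    have b_lin: "linear b"
    proof -
      have "\<forall>i<1. \<forall>x. linear (\<lambda>v. \<beta> (x(i := v)))" using bf unfolding alt_form_def by blast
      then have "linear (\<lambda>v. \<beta> ((\<lambda>i. 0)(0 := v)))" by blast
      moreover have "\<beta> ((\<lambda>i. 0)(0 := v)) = b v" for v
        unfolding b_def by (rule alt_dep[OF bf]) (simp add: tup1_def)
      ultimately show ?thesis by simp
    qed
    have gam: "\<gamma> (tup2 u w) = - b (brh u w)" for u w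
      unfolding gb ce_d1[OF bf] b_def by (simp add: tup_simps)
    define \<theta> where "\<theta> v = e v - b (\<pi> v)" for v
    define \<Phi> where "\<Phi> v = (\<pi> v, \<theta> v)" for v
    have th_add: "\<theta> (a + a') = \<theta> a + \<theta> a'" for a a'
      unfolding \<theta>_def by (simp add: e_add pi_add linear_add[OF b_lin])
    have th_scale: "\<theta> (r *\<^sub>R a) = r * \<theta> a" for r a
      unfolding \<theta>_def by (simp add: e_scale pi_scale linear_scale[OF b_lin] algebra_simps)
    have th_diff: "\<theta> (a - a') = \<theta> a - \<theta> a'" for a a'
      using th_add[of "a - a'" a'] by simp
    have th_xi: "\<theta> (r *\<^sub>R \<xi>) = r * c" for r
      unfolding \<theta>_def c_def by (simp add: e_scale pi_scale pxi linear_0[OF b_lin])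
    have Phi_lin: "linear \<Phi>"
      by (rule linearI) (simp_all add: \<Phi>_def pi_add pi_scale th_add th_scale)
    have inj: "inj \<Phi>"
    proof (rule injI)
      fix a a' assume "\<Phi> a = \<Phi> a'"
      then have p: "\<pi> (a - a') = 0" and t: "\<theta> (a - a') = 0"
        unfolding \<Phi>_def by (simp_all add: pi_diff th_diff)
      from p have "a - a' \<in> range (\<lambda>t::real. t *\<^sub>R \<xi>)" using xi_span(2) by blast
      then obtain r where r: "a - a' = r *\<^sub>R \<xi>" by blast
      then have "r * c = 0" using t th_xi[of r] by metis
      then have "r = 0" using c_pos by simp
      then show "a = a'" using r by simp
    qed
    have surj: "surj \<Phi>"
    proof (rule surjI[where f = "\<lambda>p. (SOME x. \<pi> x = fst p) + ((snd p - \<theta> (SOME x. \<pi> x = fst p)) / c) *\<^sub>R \<xi>"])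
      fix p :: "'h \<times> real"
      define x where "x = (SOME x. \<pi> x = fst p)"
      have x: "\<pi> x = fst p" unfolding x_def by (rule someI_ex) (metis pi_surj surjD)
      have "\<Phi> (x + ((snd p - \<theta> x) / c) *\<^sub>R \<xi>) = p"
        unfolding \<Phi>_def using c_pos by (simp add: pi_add pi_scale pxi x th_add th_xi)
      then show "\<Phi> (x + ((snd p - \<theta> x) / c) *\<^sub>R \<xi>) = p" .
    qed
    have hom: "\<forall>x y. \<Phi> (brg x y) = sum_R_bracket brh (\<Phi> x) (\<Phi> y)"
    proof (intro allI)
      fix x y
      have "\<theta> (brg x y) = 0" unfolding \<theta>_def by (simp add: curv gam pi_hom)
      then show "\<Phi> (brg x y) = sum_R_bracket brh (\<Phi> x) (\<Phi> y)"
        unfolding \<Phi>_def sum_R_bracket_def by (simp add: pi_hom)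
    qed
    show "\<exists>\<Phi> :: 'g \<Rightarrow> 'h \<times> real. linear \<Phi> \<and> bij \<Phi> \<and>
           (\<forall>x y. \<Phi> (brg x y) = sum_R_bracket brh (\<Phi> x) (\<Phi> y))"
      using Phi_lin inj surj hom unfolding bij_def by blast
  qed
  show ?thesis using P1 P2 P3 P4 by blast
qed
end
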